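(* Let $G$ be a residually finite locally nilpotent group containing an element with finite centralizer. Then $G$ is finite. *)

theory Defs
  imports "HOL-Algebra.Algebra"
begin

definition centralizer :: "('a, 'b) monoid_scheme \<Rightarrow> 'a \<Rightarrow> 'a set" where
  "centralizer G x = {g \<in> carrier G. g \<otimes>\<^bsub>G\<^esub> x = x \<otimes>\<^bsub>G\<^esub> g}"

text \<open>Lower central series: gamma_1 = G (index 0 here), gamma_{i+1} = [gamma_i, G].\<close>
fun lower_central :: "('a, 'b) monoid_scheme \<Rightarrow> nat \<Rightarrow> 'a set" where
  "lower_central G 0 = carrier G"
| "lower_central G (Suc n) = generate G
     {a \<otimes>\<^bsub>G\<^esub> b \<otimes>\<^bsub>G\<^esub> inv\<^bsub>G\<^esub> a \<otimes>\<^bsub>G\<^esub> inv\<^bsub>G\<^esub> b | a b. a \<in> lower_central G n \<and> b \<in> carrier G}"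

definition nilpotent_group :: "('a, 'b) monoid_scheme \<Rightarrow> bool" where
  "nilpotent_group G \<longleftrightarrow> group G \<and> (\<exists>n. lower_central G n = {\<one>\<^bsub>G\<^esub>})"

definition locally_nilpotent :: "('a, 'b) monoid_scheme \<Rightarrow> bool" where
  "locally_nilpotent G \<longleftrightarrow> group G \<and>
     (\<forall>S. S \<subseteq> carrier G \<and> finite S \<longrightarrow> nilpotent_group (subgroup_generated G S))"

definition residually_finite :: "('a, 'b) monoid_scheme \<Rightarrow> bool" where
  "residually_finite G \<longleftrightarrow> group G \<and>
     (\<forall>g \<in> carrier G. g \<noteq> \<one>\<^bsub>G\<^esub> \<longrightarrow>
        (\<exists>N. N \<lhd> G \<and> finite (rcosets\<^bsub>G\<^esub> N) \<and> g \<notin> N))"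

end

theory Submission
  imports Defs
begin

fun citer :: "('a, 'b) monoid_scheme \<Rightarrow> 'a \<Rightarrow> 'a \<Rightarrow> nat \<Rightarrow> 'a" where
  "citer G x n 0 = n"
| "citer G x n (Suc i) = citer G x n i \<otimes>\<^bsub>G\<^esub> x \<otimes>\<^bsub>G\<^esub> inv\<^bsub>G\<^esub> (citer G x n i) \<otimes>\<^bsub>G\<^esub> inv\<^bsub>G\<^esub> x"

lemma lc_sub:
  assumes "group H"
  shows "lower_central H i \<subseteq> carrier H"
proof (induction i)
  case 0 then show ?case by simp
next
  case (Suc i)
  interpret H: group H by fact
  show ?case unfolding lower_central.simps
    by (rule H.generate_incl) (use Suc in blast)
qed

lemma comm_one:
  fixes G (structure)
  assumes "group G" "a \<in> carrier G" "x \<in> carrier G"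
    and "a \<otimes>\<^bsub>G\<^esub> x \<otimes>\<^bsub>G\<^esub> inv\<^bsub>G\<^esub> a \<otimes>\<^bsub>G\<^esub> inv\<^bsub>G\<^esub> x = \<one>\<^bsub>G\<^esub>"
  shows "a \<otimes>\<^bsub>G\<^esub> x = x \<otimes>\<^bsub>G\<^esub> a"
proof -
  interpret group G by fact
  have "a \<otimes> x \<otimes> inv a = x"
    using assms by (metis inv_closed m_closed inv_solve_right l_one)
  then show ?thesis using assms by (metis inv_closed m_closed inv_solve_right)
qed

lemma key:
  fixes G (structure)
  assumes "group G" "locally_nilpotent G" "x \<in> carrier G" "n \<in> carrier G"
    "n \<noteq> \<one>\<^bsub>G\<^esub>" "N \<lhd> G" "n \<in> N"
  shows "\<exists>k \<in> N. k \<noteq> \<one>\<^bsub>G\<^esub> \<and> k \<in> centralizer G x"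
proof -
  interpret group G by fact
  define H where "H = subgroup_generated G {x, n}"
  have nH: "nilpotent_group H" using assms(2,3,4) unfolding locally_nilpotent_def H_def by auto
  then obtain m where m: "lower_central H m = {\<one>\<^bsub>H\<^esub>}" unfolding nilpotent_group_def by auto
  have gH: "group H" unfolding H_def by simp
  have xH: "x \<in> carrier H" "n \<in> carrier H" using assms(3,4)
    unfolding H_def carrier_subgroup_generated by (auto intro: generate.incl)
  have HG: "carrier H \<subseteq> carrier G" unfolding H_def carrier_subgroup_generated
    by (rule generate_incl) auto
  have kc: "citer G x n i \<in> lower_central H i" for i
  proof (induction i)
    case 0 then show ?case using xH by simp
  next
    case (Suc i)
    have ci: "citer G x n i \<in> carrier H" using Suc lc_sub[OF gH] by blast
    have "citer G x n (Suc i) = citer G x n i \<otimes>\<^bsub>H\<^esub> x \<otimes>\<^bsub>H\<^esub> inv\<^bsub>H\<^esub> (citer G x n i) \<otimes>\<^bsub>H\<^esub> inv\<^bsub>H\<^esub> x"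
      using ci xH unfolding H_def by simp
    then show ?case unfolding lower_central.simps using Suc xH
      by (auto intro!: generate.incl)
  qed
  have kG: "citer G x n i \<in> carrier G" for i using kc[of i] lc_sub[OF gH] HG by blast
  have kN: "citer G x n i \<in> N" for i
  proof (induction i)
    case 0 then show ?case using assms by simp
  next
    case (Suc i)
    have sN: "subgroup N G" using assms(6) normal_imp_subgroup by blast
    have "x \<otimes> inv (citer G x n i) \<otimes> inv x \<in> N"
      using assms(6) Suc assms(3) sN by (meson normal.inv_op_closed2 subgroup.m_inv_closed)
    then have "citer G x n i \<otimes> (x \<otimes> inv (citer G x n i) \<otimes> inv x) \<in> N"
      using Suc sN by (meson subgroup.m_closed)
    then show ?case using kG[of i] assms(3) by (simp add: m_assoc)
  qed
  have km: "citer G x n m = \<one>" using kc[of m] m unfolding H_def by simp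
  have "\<exists>i. citer G x n i \<noteq> \<one> \<and> citer G x n (Suc i) = \<one>"
  proof (rule ccontr)
    assume "\<not> ?thesis"
    then have "citer G x n i \<noteq> \<one>" for i by (induction i) (use assms(5) in auto)
    with km show False by blast
  qed
  then obtain i where i: "citer G x n i \<noteq> \<one>" "citer G x n (Suc i) = \<one>" by blast
  have "citer G x n i \<otimes> x = x \<otimes> citer G x n i"
    by (rule comm_one[OF assms(1) kG assms(3)]) (use i in simp)
  then show ?thesis using i kN kG unfolding centralizer_def by auto
qed

theorem lemma2p4:
  fixes G :: "('a, 'b) monoid_scheme"
  assumes "group G"
    and "residually_finite G"
    and "locally_nilpotent G"
    and "\<exists>x \<in> carrier G. finite (centralizer G x)"
  shows "finite (carrier G)"
proof -
  interpret group G by fact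
  obtain x where x: "x \<in> carrier G" "finite (centralizer G x)" using assms(4) by blast
  define C where "C = centralizer G x - {\<one>\<^bsub>G\<^esub>}"
  have "\<forall>g\<in>C. \<exists>N. N \<lhd> G \<and> finite (rcosets\<^bsub>G\<^esub> N) \<and> g \<notin> N"
    using assms(2) unfolding residually_finite_def C_def centralizer_def by auto
  then obtain Nf where Nf0: "\<forall>g\<in>C. Nf g \<lhd> G \<and> finite (rcosets\<^bsub>G\<^esub> (Nf g)) \<and> g \<notin> Nf g"
    using bchoice[of C "\<lambda>g N. N \<lhd> G \<and> finite (rcosets\<^bsub>G\<^esub> N) \<and> g \<notin> N"] by blast
  have Nf: "\<And>g. g \<in> C \<Longrightarrow> Nf g \<lhd> G \<and> finite (rcosets\<^bsub>G\<^esub> (Nf g)) \<and> g \<notin> Nf g"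
    using Nf0 by blast
  have sg: "\<And>g. g \<in> C \<Longrightarrow> subgroup (Nf g) G" using Nf normal_imp_subgroup by blast
  define N where "N = carrier G \<inter> (\<Inter>g\<in>C. Nf g)"
  have sN: "subgroup N G"
  proof (rule subgroupI)
    show "N \<subseteq> carrier G" unfolding N_def by blast
    have "\<one>\<^bsub>G\<^esub> \<in> N" unfolding N_def using sg subgroup.one_closed by blast
    then show "N \<noteq> {}" by blast
    show "inv\<^bsub>G\<^esub> a \<in> N" if "a \<in> N" for a using that sg unfolding N_def
      by (auto intro: subgroup.m_inv_closed)
    show "a \<otimes>\<^bsub>G\<^esub> b \<in> N" if "a \<in> N" "b \<in> N" for a b using that sg unfolding N_def
      by (auto intro: subgroup.m_closed)
  qed
  have nN: "N \<lhd> G" unfolding normal_inv_iff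
  proof (intro conjI sN ballI)
    fix y h assume "y \<in> carrier G" "h \<in> N"
    then show "y \<otimes>\<^bsub>G\<^esub> h \<otimes>\<^bsub>G\<^esub> inv\<^bsub>G\<^esub> y \<in> N" using Nf unfolding N_def
      by (auto intro: normal.inv_op_closed2)
  qed
  define phi where "phi = (\<lambda>y. \<lambda>g\<in>C. Nf g #>\<^bsub>G\<^esub> y)"
  have inj: "inj_on phi (carrier G)"
  proof (rule inj_onI, rule ccontr)
    fix y z assume yz: "y \<in> carrier G" "z \<in> carrier G" "phi y = phi z" "y \<noteq> z"
    have "y \<otimes>\<^bsub>G\<^esub> inv\<^bsub>G\<^esub> z \<in> Nf g" if g: "g \<in> C" for g
    proof -
      have "Nf g #>\<^bsub>G\<^esub> y = Nf g #>\<^bsub>G\<^esub> z" using yz(3) g unfolding phi_def by (metis restrict_apply')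
      then have "y \<in> Nf g #>\<^bsub>G\<^esub> z" using rcos_self[OF yz(1) sg[OF g]] by simp
      then show ?thesis using subgroup.rcos_module_imp[OF sg[OF g] is_group yz(2)] by blast
    qed
    then have inN: "y \<otimes>\<^bsub>G\<^esub> inv\<^bsub>G\<^esub> z \<in> N" unfolding N_def using yz by auto
    have ne: "y \<otimes>\<^bsub>G\<^esub> inv\<^bsub>G\<^esub> z \<noteq> \<one>\<^bsub>G\<^esub>" using inv_solve_right[of "\<one>\<^bsub>G\<^esub>" y z] yz by auto
    obtain k where k: "k \<in> N" "k \<noteq> \<one>\<^bsub>G\<^esub>" "k \<in> centralizer G x"
      using key[OF assms(1) assms(3) x(1) _ ne nN inN] yz by auto
    then have "k \<in> C" unfolding C_def by auto
    then show False using k Nf unfolding N_def by auto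
  qed
  have "phi ` carrier G \<subseteq> Pi\<^sub>E C (\<lambda>g. rcosets\<^bsub>G\<^esub> (Nf g))"
  proof
    fix w assume "w \<in> phi ` carrier G"
    then obtain y where y: "y \<in> carrier G" "w = phi y" by blast
    show "w \<in> Pi\<^sub>E C (\<lambda>g. rcosets\<^bsub>G\<^esub> (Nf g))"
      unfolding y(2) phi_def restrict_PiE_iff
      using sg y(1) rcosetsI subgroup.subset by blast
  qed
  moreover have "finite (Pi\<^sub>E C (\<lambda>g. rcosets\<^bsub>G\<^esub> (Nf g)))"
  proof (rule finite_PiE)
    show "finite C" unfolding C_def using x(2) by blast
    show "\<And>g. g \<in> C \<Longrightarrow> finite (rcosets\<^bsub>G\<^esub> (Nf g))" using Nf by blast
  qed
  ultimately have "finite (phi ` carrier G)" by (rule finite_subset)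
  then show ?thesis using inj finite_imageD by blast
qed

end
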